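(* Let $(X,d)$ be a finite ultrametric space with $|X|\geqslant 2$. If $(X,d)\in\mathfrak U$, then the diametral graph $G_d$ of $(X,d)$ is a complete bipartite graph.
   Context: For a metric space $(X,d)$, its spectrum is $\operatorname{Sp}(X)=\{d(x,y): x,y\in X,\ x\neq y\}$ and $\operatorname{diam}X=\sup\{d(x,y):x,y\in X\}$. $\mathfrak U$ denotes the class of finite ultrametric spaces $X$ with $|\operatorname{Sp}(X)|=|X|-1$. The diametral graph $G_d$ of $(X,d)$ is the graph with vertex set $X$ in which $\{u,v\}$ is an edge iff $d(u,v)=\operatorname{diam}X$. Graphs are simple undirected graphs $(V,E)$ with $V\neq\varnothing$. A nonempty graph $G$ is complete $k$-partite, written $G=G[X_1,\dots,X_k]$, if its vertex set is partitioned into $k$ disjoint nonempty sets $X_1,\dots,X_k$ such that no edge joins two vertices of the same $X_i$ and any two vertices from different parts are adjacent; complete bipartite means $k=2$. *)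

theory Defs
  imports Complex_Main
begin

definition metric_on :: "'a set \<Rightarrow> ('a \<Rightarrow> 'a \<Rightarrow> real) \<Rightarrow> bool" where
  "metric_on X d \<longleftrightarrow>
     (\<forall>x\<in>X. \<forall>y\<in>X. d x y \<ge> 0 \<and> (d x y = 0 \<longleftrightarrow> x = y) \<and> d x y = d y x) \<and>
     (\<forall>x\<in>X. \<forall>y\<in>X. \<forall>z\<in>X. d x z \<le> d x y + d y z)"

definition ultrametric_on :: "'a set \<Rightarrow> ('a \<Rightarrow> 'a \<Rightarrow> real) \<Rightarrow> bool" where
  "ultrametric_on X d \<longleftrightarrow> metric_on X d \<and>
     (\<forall>x\<in>X. \<forall>y\<in>X. \<forall>z\<in>X. d x z \<le> max (d x y) (d y z))"

definition spectrum_of :: "'a set \<Rightarrow> ('a \<Rightarrow> 'a \<Rightarrow> real) \<Rightarrow> real set" where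
  "spectrum_of X d = {d x y | x y. x \<in> X \<and> y \<in> X \<and> x \<noteq> y}"

definition diam_of :: "'a set \<Rightarrow> ('a \<Rightarrow> 'a \<Rightarrow> real) \<Rightarrow> real" where
  "diam_of X d = Sup {d x y | x y. x \<in> X \<and> y \<in> X}"

definition in_class_U :: "'a set \<Rightarrow> ('a \<Rightarrow> 'a \<Rightarrow> real) \<Rightarrow> bool" where
  "in_class_U X d \<longleftrightarrow> finite X \<and> ultrametric_on X d \<and>
     card (spectrum_of X d) = card X - 1"

definition diametral_edge :: "'a set \<Rightarrow> ('a \<Rightarrow> 'a \<Rightarrow> real) \<Rightarrow> 'a \<Rightarrow> 'a \<Rightarrow> bool" where
  "diametral_edge X d u v \<longleftrightarrow> u \<in> X \<and> v \<in> X \<and> u \<noteq> v \<and> d u v = diam_of X d"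

definition complete_bipartite :: "'a set \<Rightarrow> ('a \<Rightarrow> 'a \<Rightarrow> bool) \<Rightarrow> bool" where
  "complete_bipartite V E \<longleftrightarrow> V \<noteq> {} \<and>
     (\<exists>A B. A \<noteq> {} \<and> B \<noteq> {} \<and> A \<inter> B = {} \<and> A \<union> B = V \<and>
        (\<forall>u\<in>V. \<forall>v\<in>V. E u v \<longleftrightarrow> (u \<in> A \<and> v \<in> B) \<or> (u \<in> B \<and> v \<in> A)))"

end

theory Submission
  imports Defs
begin

lemma um_facts:
  assumes "ultrametric_on X d"
  shows "\<And>x y. x\<in>X \<Longrightarrow> y\<in>X \<Longrightarrow> d x y = d y x"
    and "\<And>x y. x\<in>X \<Longrightarrow> y\<in>X \<Longrightarrow> d x y \<ge> 0"
    and "\<And>x y. x\<in>X \<Longrightarrow> y\<in>X \<Longrightarrow> d x y = 0 \<longleftrightarrow> x = y"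
    and "\<And>x y z. x\<in>X \<Longrightarrow> y\<in>X \<Longrightarrow> z\<in>X \<Longrightarrow> d x z \<le> max (d x y) (d y z)"
  using assms unfolding ultrametric_on_def metric_on_def by blast+

lemma sp_finite: "finite Y \<Longrightarrow> finite (spectrum_of Y d)"
proof -
  assume f: "finite Y"
  have "spectrum_of Y d \<subseteq> (\<lambda>(x,y). d x y) ` (Y \<times> Y)"
    unfolding spectrum_of_def by auto
  then show ?thesis using f by (meson finite_SigmaI finite_imageI finite_subset)
qed

lemma sp_step:
  assumes um: "ultrametric_on X d" and f: "finite Y" and YX: "Y \<subseteq> X"
    and y: "y \<in> Y" and ne: "Y - {y} \<noteq> {}"
  shows "card (spectrum_of Y d) \<le> card (spectrum_of (Y - {y}) d) + 1"
proof -
  note U = um_facts[OF um]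
  have fin: "finite ((\<lambda>z. d y z) ` (Y - {y}))" using f by auto
  have neI: "(\<lambda>z. d y z) ` (Y - {y}) \<noteq> {}" using ne by auto
  define m where "m = Min ((\<lambda>z. d y z) ` (Y - {y}))"
  obtain z where z: "z \<in> Y - {y}" "d y z = m"
  proof -
    have "m \<in> (\<lambda>z. d y z) ` (Y - {y})" using Min_in[OF fin neI] unfolding m_def .
    thus ?thesis using that by blast
  qed
  have mmin: "\<And>w. w \<in> Y - {y} \<Longrightarrow> m \<le> d y w" unfolding m_def using fin by auto
  have key: "\<And>w. w \<in> Y - {y} \<Longrightarrow> d y w \<in> spectrum_of (Y - {y}) d \<union> {m}"
  proof -
    fix w assume w: "w \<in> Y - {y}"
    have yX: "y \<in> X" and wX: "w \<in> X" and zX: "z \<in> X" using y w z YX by auto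
    show "d y w \<in> spectrum_of (Y - {y}) d \<union> {m}"
    proof (cases "d y w > m")
      case True
      have "d y w \<le> max (d y z) (d z w)" using U(4)[OF yX zX wX] .
      hence h1: "d y w \<le> d z w" using True z by auto
      have "d z w \<le> max (d z y) (d y w)" using U(4)[OF zX yX wX] .
      hence "d z w \<le> d y w" using True z U(1)[OF zX yX] by auto
      hence "d y w = d z w" using h1 by auto
      moreover have "w \<noteq> z" using True z by auto
      ultimately show ?thesis using w z unfolding spectrum_of_def by blast
    next
      case False thus ?thesis using mmin[OF w] by auto
    qed
  qed
  have "spectrum_of Y d \<subseteq> spectrum_of (Y - {y}) d \<union> {m}"
  proof
    fix s assume "s \<in> spectrum_of Y d"
    then obtain p q where pq: "s = d p q" "p \<in> Y" "q \<in> Y" "p \<noteq> q"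
      unfolding spectrum_of_def by blast
    show "s \<in> spectrum_of (Y - {y}) d \<union> {m}"
    proof (cases "p = y")
      case True thus ?thesis using pq key by auto
    next
      case F1: False
      show ?thesis
      proof (cases "q = y")
        case True
        have "d p q = d q p" using U(1) pq YX by auto
        thus ?thesis using True pq key F1 by auto
      next
        case False thus ?thesis using pq F1 unfolding spectrum_of_def by blast
      qed
    qed
  qed
  hence "card (spectrum_of Y d) \<le> card (spectrum_of (Y - {y}) d \<union> {m})"
    by (intro card_mono) (use f sp_finite[of "Y - {y}" d] in auto)
  also have "\<dots> \<le> card (spectrum_of (Y - {y}) d) + 1"
    using card_Un_le[of "spectrum_of (Y - {y}) d" "{m}"] by simp
  finally show ?thesis .
qed

lemma sp_grow:
  assumes um: "ultrametric_on X d" and fT: "finite T"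
  shows "S \<subseteq> X \<Longrightarrow> finite S \<Longrightarrow> S \<noteq> {} \<Longrightarrow> T \<subseteq> X \<Longrightarrow> T \<inter> S = {} \<Longrightarrow>
    card (spectrum_of (S \<union> T) d) \<le> card (spectrum_of S d) + card T"
  using fT
proof (induction T rule: finite_induct)
  case empty thus ?case by simp
next
  case (insert y T)
  have e: "S \<union> insert y T - {y} = S \<union> T" using insert by auto
  have "card (spectrum_of (S \<union> insert y T) d) \<le> card (spectrum_of (S \<union> insert y T - {y}) d) + 1"
    by (rule sp_step[OF um]) (use insert in auto)
  also have "\<dots> \<le> card (spectrum_of S d) + card T + 1" using e insert by auto
  finally show ?case using insert by simp
qed

theorem corollary5:
  fixes X :: "'a set" and d :: "'a \<Rightarrow> 'a \<Rightarrow> real"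
  assumes "finite X" and "ultrametric_on X d" and "card X \<ge> 2"
    and "in_class_U X d"
  shows "complete_bipartite X (diametral_edge X d)"
proof -
  note U = um_facts[OF assms(2)]
  define DS where "DS = {d x y | x y. x \<in> X \<and> y \<in> X}"
  define D where "D = diam_of X d"
  have DSi: "DS = (\<lambda>(x,y). d x y) ` (X \<times> X)" unfolding DS_def by auto
  have finDS: "finite DS" using DSi assms(1) by auto
  obtain p q where pq: "p \<in> X" "q \<in> X" "p \<noteq> q"
    using assms(1,3) card_le_Suc0_iff_eq[OF assms(1)] by force
  have neDS: "DS \<noteq> {}" using pq unfolding DS_def by auto
  have DM: "D = Max DS" unfolding D_def diam_of_def DS_def[symmetric]
    using finDS neDS by (simp add: cSup_eq_Max)
  have le: "\<And>x y. x \<in> X \<Longrightarrow> y \<in> X \<Longrightarrow> d x y \<le> D"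
  proof -
    fix x y assume "x \<in> X" "y \<in> X"
    hence "d x y \<in> DS" unfolding DS_def by blast
    thus "d x y \<le> D" unfolding DM using finDS by simp
  qed
  obtain a b where ab: "a \<in> X" "b \<in> X" "d a b = D"
    using Max_in[OF finDS neDS] unfolding DM DS_def by auto
  have "d p q > 0" using U(2,3) pq by force
  hence Dpos: "D > 0" using le pq by force
  define A where "A = {x\<in>X. d a x < D}"
  define B where "B = {x\<in>X. d a x = D}"
  have aA: "a \<in> A" unfolding A_def using ab Dpos U(3)[of a a] by auto
  have bB: "b \<in> B" unfolding B_def using ab by auto
  have AB: "A \<inter> B = {}" "A \<union> B = X"
    unfolding A_def B_def using le ab(1) by (auto simp: less_le)
  have noBB: False if u: "u \<in> B" and v: "v \<in> B" and uv: "u \<noteq> v" and duv: "d u v = D" for u v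
  proof -
    have uX: "u \<in> X" and vX: "v \<in> X" using u v B_def by auto
    have au: "a \<noteq> u" and av: "a \<noteq> v" using u v B_def U(3)[of a a] ab(1) Dpos by auto
    define S where "S = {a, u, v}"
    have cS: "card S = 3" unfolding S_def using au av uv by auto
    have SX: "S \<subseteq> X" unfolding S_def using ab uX vX by auto
    have "spectrum_of S d \<subseteq> {D}"
    proof
      fix s assume "s \<in> spectrum_of S d"
      then obtain x y where xy: "s = d x y" "x \<in> S" "y \<in> S" "x \<noteq> y"
        unfolding spectrum_of_def by blast
      have "d a u = D" "d a v = D" "d u v = D" using u v duv B_def by auto
      moreover have "d u a = D" "d v a = D" "d v u = D"
        using calculation U(1) ab uX vX by metis+
      ultimately show "s \<in> {D}" using xy unfolding S_def by auto
    qed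
    hence c1: "card (spectrum_of S d) \<le> 1"
      by (metis card.empty card_mono finite.emptyI finite.insertI is_singletonI
          is_singleton_altdef)
    have fS: "finite (X - S)" using assms(1) by auto
    have g: "card (spectrum_of (S \<union> (X - S)) d) \<le> card (spectrum_of S d) + card (X - S)"
      by (rule sp_grow[OF assms(2) fS]) (use SX assms(1) S_def in auto)
    have e: "S \<union> (X - S) = X" using SX by auto
    have c3: "card (X - S) = card X - 3" using cS SX assms(1) card_Diff_subset[of S X] finite_subset[OF SX] by simp
    have cU: "card (spectrum_of X d) = card X - 1" using assms(4) in_class_U_def by auto
    have c4: "card X \<ge> 3" using cS SX assms(1) card_mono by metis
    have "card X - 1 \<le> card (spectrum_of S d) + (card X - 3)"
      using g unfolding e c3 cU .
    thus False using c1 c4 by linarith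
  qed
  have edge: "\<forall>u\<in>X. \<forall>v\<in>X. diametral_edge X d u v \<longleftrightarrow> (u \<in> A \<and> v \<in> B) \<or> (u \<in> B \<and> v \<in> A)"
  proof (intro ballI)
    fix u v assume uX: "u \<in> X" and vX: "v \<in> X"
    have cross: "d u v = D \<and> u \<noteq> v" if "u \<in> A" "v \<in> B" for u v
    proof -
      have "u \<in> X" "v \<in> X" using that A_def B_def by auto
      have "d a v \<le> max (d a u) (d u v)" using U(4) ab(1) \<open>u\<in>X\<close> \<open>v\<in>X\<close> by blast
      hence "d u v \<ge> D" using that A_def B_def by auto
      thus ?thesis using le \<open>u\<in>X\<close> \<open>v\<in>X\<close> that A_def B_def by force
    qed
    have inA: "d u v < D" if "u \<in> A" "v \<in> A" for u v
    proof -
      have "u \<in> X" "v \<in> X" using that A_def by auto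
      have "d u v \<le> max (d u a) (d a v)" using U(4) ab(1) \<open>u\<in>X\<close> \<open>v\<in>X\<close> by blast
      moreover have "d u a = d a u" using U(1) ab(1) \<open>u\<in>X\<close> by auto
      ultimately show ?thesis using that A_def by auto
    qed
    show "diametral_edge X d u v \<longleftrightarrow> (u \<in> A \<and> v \<in> B) \<or> (u \<in> B \<and> v \<in> A)"
    proof -
      have "u \<in> A \<or> u \<in> B" "v \<in> A \<or> v \<in> B" using AB uX vX by auto
      moreover have "d v u = d u v" using U(1) uX vX by auto
      ultimately show ?thesis unfolding diametral_edge_def D_def[symmetric]
        using cross[of u v] cross[of v u] inA[of u v] noBB[of u v] uX vX AB(1)
        by auto
    qed
  qed
  show ?thesis unfolding complete_bipartite_def
    using aA bB AB edge by blast
qed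

end
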